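(* Let $m\in[0,1]$, $n=\sqrt{1-m^2}$, $k\in[-\pi,\pi]$ (with $(k,m)\neq(0,0)$) and $t\in\mathbb{R}$. Define $$\omega=\omega(k,m)=\arccos\big(n\cos k\big)\in[0,\pi],\qquad \omega_{\rm D}=\sqrt{k^2+m^2},$$ $$v=\partial_k\omega=\frac{n\sin k}{\sin\omega},\qquad v_{\rm D}=\frac{k}{\sqrt{k^2+m^2}},$$ the $2\times2$ Hermitian matrices $$H(k)=\frac{\omega}{\sin\omega}\begin{pmatrix}-n\sin k & m\\ m & n\sin k\end{pmatrix},\qquad H_{\rm D}(k)=\begin{pmatrix}-k & m\\ m & k\end{pmatrix},$$ and the unitaries $U^t(k)=\exp(-iH(k)t)$, $U^t_{\rm D}(k)=\exp(-iH_{\rm D}(k)t)$, and $V(k,t)=U^t_{\rm D}(k)\,U^t(k)^\dagger$. If $e^{i\mu}$ (with $\mu=\mu(k,m,t)\in\mathbb{R}$) is an eigenvalue of $V(k,t)$, then $$\cos\mu\ \ge\ \cos(\alpha t)-\beta,$$ where $$\alpha=\alpha(k,m):=\omega_{\rm D}-\omega,\qquad \beta=\beta(k,m):=1-v\,v_{\rm D}-\sqrt{(1-v^2)(1-v_{\rm D}^2)}.$$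
   Context: $H(k)$ is the momentum-space effective Hamiltonian of the one-dimensional Dirac quantum cellular automaton (with $\omega$ its dispersion relation and $v$ its group velocity), and $H_{\rm D}(k)$ is the one-dimensional Dirac Hamiltonian in Planck units with $\hbar=c=1$. *)

theory Defs
  imports Complex_Main "Jordan_Normal_Form.Schur_Decomposition"
begin

definition mat_exp :: "complex mat \<Rightarrow> complex mat" where
  "mat_exp A = mat (dim_row A) (dim_col A)
     (\<lambda>(i,j). (\<Sum>n. (A ^\<^sub>m n) $$ (i,j) / of_nat (fact n)))"

definition mat2 :: "complex \<Rightarrow> complex \<Rightarrow> complex \<Rightarrow> complex \<Rightarrow> complex mat" where
  "mat2 a b c d = mat_of_rows_list 2 [[a, b], [c, d]]"

definition qca_n :: "real \<Rightarrow> real" where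
  "qca_n m = sqrt (1 - m\<^sup>2)"

definition qca_omega :: "real \<Rightarrow> real \<Rightarrow> real" where
  "qca_omega k m = arccos (qca_n m * cos k)"

definition dirac_omega :: "real \<Rightarrow> real \<Rightarrow> real" where
  "dirac_omega k m = sqrt (k\<^sup>2 + m\<^sup>2)"

definition qca_v :: "real \<Rightarrow> real \<Rightarrow> real" where
  "qca_v k m = qca_n m * sin k / sin (qca_omega k m)"

definition dirac_v :: "real \<Rightarrow> real \<Rightarrow> real" where
  "dirac_v k m = k / sqrt (k\<^sup>2 + m\<^sup>2)"

definition qca_H :: "real \<Rightarrow> real \<Rightarrow> complex mat" where
  "qca_H k m = (complex_of_real (qca_omega k m / sin (qca_omega k m))) \<cdot>\<^sub>m
     mat2 (- (qca_n m * sin k)) m m (qca_n m * sin k)"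

definition dirac_H :: "real \<Rightarrow> real \<Rightarrow> complex mat" where
  "dirac_H k m = mat2 (- k) m m k"

definition qca_U :: "real \<Rightarrow> real \<Rightarrow> real \<Rightarrow> complex mat" where
  "qca_U k m t = mat_exp ((- \<i> * complex_of_real t) \<cdot>\<^sub>m qca_H k m)"

definition dirac_U :: "real \<Rightarrow> real \<Rightarrow> real \<Rightarrow> complex mat" where
  "dirac_U k m t = mat_exp ((- \<i> * complex_of_real t) \<cdot>\<^sub>m dirac_H k m)"

definition V_mat :: "real \<Rightarrow> real \<Rightarrow> real \<Rightarrow> complex mat" where
  "V_mat k m t = dirac_U k m t * mat_adjoint (qca_U k m t)"

definition alpha :: "real \<Rightarrow> real \<Rightarrow> real" where
  "alpha k m = dirac_omega k m - qca_omega k m"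

definition beta :: "real \<Rightarrow> real \<Rightarrow> real" where
  "beta k m = 1 - qca_v k m * dirac_v k m
     - sqrt ((1 - (qca_v k m)\<^sup>2) * (1 - (dirac_v k m)\<^sup>2))"

end

theory Submission imports Defs begin
lemma mat2_dims[simp]: "dim_row (mat2 a b c d) = 2" "dim_col (mat2 a b c d) = 2"
  by (auto simp: mat2_def mat_of_rows_list_def)
lemma mat2_carrier: "mat2 a b c d \<in> carrier_mat 2 2"
  unfolding carrier_mat_def by simp
lemma mat2_idx[simp]: "mat2 a b c d $$ (0,0) = a" "mat2 a b c d $$ (0,1) = b"
  "mat2 a b c d $$ (Suc 0,0) = c" "mat2 a b c d $$ (Suc 0,Suc 0) = d" "mat2 a b c d $$ (0,Suc 0) = b"
  by (auto simp: mat2_def mat_of_rows_list_def)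
lemma mat2_eqI: assumes "M \<in> carrier_mat 2 2" "M $$ (0,0) = a" "M $$ (0,1) = b"
  "M $$ (1,0) = c" "M $$ (1,1) = d" shows "M = mat2 a b c d"
proof (rule eq_matI)
  fix i j assume "i < dim_row (mat2 a b c d)" "j < dim_col (mat2 a b c d)"
  then have "i < 2" "j < 2" by auto
  then show "M $$ (i,j) = mat2 a b c d $$ (i,j)" using assms
    by (auto simp: less_2_cases_iff)
qed (use assms in auto)
lemma sum2: "(\<Sum>i = 0..<2. f i) = f 0 + f (Suc 0)"
  by (simp add: eval_nat_numeral)
lemma mat2_mult: "mat2 a b c d * mat2 e f g h = mat2 (a*e+b*g) (a*f+b*h) (c*e+d*g) (c*f+d*h)"
  apply (rule mat2_eqI)
  apply (rule mult_carrier_mat[OF mat2_carrier mat2_carrier])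
  apply (auto simp: scalar_prod_def row_def col_def sum2)
  done
lemma mat2_one: "1\<^sub>m 2 = mat2 1 0 0 1"
  apply (rule mat2_eqI) 
  apply (rule one_carrier_mat)
  apply auto
  done
lemma adj_carrier: "mat_adjoint A \<in> carrier_mat (dim_col A) (dim_row A)"
  unfolding mat_adjoint_def using mat_of_rows_carrier(1)[of "dim_row A" "map conjugate (cols A)"]
  by simp
lemma adj_idx: "i < dim_col A \<Longrightarrow> j < dim_row A \<Longrightarrow> mat_adjoint A $$ (i,j) = cnj (A $$ (j,i))"
  unfolding mat_adjoint_def mat_of_rows_def by simp
lemma mat2_adj: "mat_adjoint (mat2 a b c d) = mat2 (cnj a) (cnj c) (cnj b) (cnj d)"
  apply (rule mat2_eqI) 
  using adj_carrier[of "mat2 a b c d"] apply simp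
  apply (simp_all add: adj_idx)
  done
lemma mat2_smult: "r \<cdot>\<^sub>m mat2 a b c d = mat2 (r*a) (r*b) (r*c) (r*d)"
  apply (rule mat2_eqI) 
  apply (rule smult_carrier_mat[OF mat2_carrier])
  apply auto
  done
lemma mat2_pow:
  fixes p q c :: complex
  assumes pq: "p^2 + q^2 = 1"
  shows "mat2 (c*p) (c*q) (c*q) (-(c*p)) ^\<^sub>m n =
     mat2 ((if even n then c^n else 0) + (if odd n then c^n else 0) * p)
          ((if odd n then c^n else 0) * q) ((if odd n then c^n else 0) * q)
          ((if even n then c^n else 0) - (if odd n then c^n else 0) * p)"
proof (induction n)
  case 0
  then show ?case by (simp add: mat2_one)
next
  case (Suc n)
  have q2: "q*q = 1 - p*p" using pq by (simp add: power2_eq_square algebra_simps)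
  have h: "c * (p * (p * x)) + c * (q * (q * x)) = c * x" for x
  proof -
    have "c * (p * (p * x)) + c * (q * (q * x)) = c*x*(p^2+q^2)" by (simp add: algebra_simps power2_eq_square)
    then show ?thesis using pq by simp
  qed
  show ?case
    by (simp only: pow_mat.simps Suc.IH mat2_mult)
       (cases "even n", simp_all add: algebra_simps h)
qed

lemma exp_sums: "(\<lambda>n. x^n / of_nat (fact n)) sums exp (x::complex)"
proof -
  have "(\<lambda>n. x^n /\<^sub>R fact n) sums exp x" by (rule exp_converges)
  moreover have "\<And>n. x^n /\<^sub>R fact n = x^n / of_nat (fact n)"
    by (simp add: scaleR_conv_of_real divide_inverse mult.commute)
  ultimately show ?thesis by simp
qed

lemma sums_even: fixes c :: complex shows "(\<lambda>n. (if even n then c^n else 0) / of_nat (fact n)) sums ((exp c + exp (-c))/2)"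
proof -
  have "(\<lambda>n. (c^n / of_nat (fact n) + (-c)^n / of_nat (fact n))/2) sums ((exp c + exp (-c))/2)"
    by (intro sums_divide sums_add exp_sums)
  moreover have "\<And>n. (c^n / of_nat (fact n) + (-c)^n / of_nat (fact n))/2 = (if even n then c^n else 0) / of_nat (fact n)"
    by (auto simp: power_minus_odd add_divide_distrib)
  ultimately show ?thesis by simp
qed

lemma sums_odd: fixes c :: complex shows "(\<lambda>n. (if odd n then c^n else 0) / of_nat (fact n)) sums ((exp c - exp (-c))/2)"
proof -
  have "(\<lambda>n. (c^n / of_nat (fact n) - (-c)^n / of_nat (fact n))/2) sums ((exp c - exp (-c))/2)"
    by (intro sums_divide sums_diff exp_sums)
  moreover have "\<And>n. (c^n / of_nat (fact n) - (-c)^n / of_nat (fact n))/2 = (if odd n then c^n else 0) / of_nat (fact n)"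
    by (auto simp: power_minus_odd diff_divide_distrib)
  ultimately show ?thesis by simp
qed

lemma mat2_exp:
  fixes p q c :: complex
  assumes pq: "p^2 + q^2 = 1"
  defines "ch \<equiv> (exp c + exp (-c))/2" and "sh \<equiv> (exp c - exp (-c))/2"
  shows "mat_exp (mat2 (c*p) (c*q) (c*q) (-(c*p))) = mat2 (ch + sh*p) (sh*q) (sh*q) (ch - sh*p)"
proof -
  let ?E = "\<lambda>n. (if even n then c^n else 0) / of_nat (fact n)"
  let ?O = "\<lambda>n. (if odd n then c^n else 0) / of_nat (fact n)"
  have E: "?E sums ch" unfolding ch_def by (rule sums_even)
  have O: "?O sums sh" unfolding sh_def by (rule sums_odd)
  have s1: "(\<lambda>n. ?E n + ?O n * r) sums (ch + sh * r)" for r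
    by (intro sums_add sums_mult2 E O)
  have s2: "(\<lambda>n. ?E n - ?O n * r) sums (ch - sh * r)" for r
    by (intro sums_diff sums_mult2 E O)
  have s3: "(\<lambda>n. ?O n * r) sums (sh * r)" for r
    by (intro sums_mult2 O)
  have t1: "(\<Sum>n. ((if even n then c^n else 0) + (if odd n then c^n else 0) * r) / fact n) = ch + sh*r" for r
  proof -
    have "(\<lambda>n. ((if even n then c^n else 0) + (if odd n then c^n else 0) * r) / fact n) sums (ch + sh*r)"
      using s1[of r] by (simp add: add_divide_distrib)
    then show ?thesis by (rule sums_unique[symmetric])
  qed
  have t2: "(\<Sum>n. ((if even n then c^n else 0) - (if odd n then c^n else 0) * r) / fact n) = ch - sh*r" for r
  proof -
    have "(\<lambda>n. ((if even n then c^n else 0) - (if odd n then c^n else 0) * r) / fact n) sums (ch - sh*r)"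
      using s2[of r] by (simp add: diff_divide_distrib)
    then show ?thesis by (rule sums_unique[symmetric])
  qed
  have t3: "(\<Sum>n. (if odd n then c^n else 0) * r / fact n) = sh*r" for r
  proof -
    have "(\<lambda>n. (if odd n then c^n else 0) * r / fact n) sums (sh*r)"
      using s3[of r] by (simp add: mult.commute)
    then show ?thesis by (rule sums_unique[symmetric])
  qed
  show ?thesis
    apply (rule mat2_eqI)
    using mat_carrier[of 2 2] apply (simp add: mat_exp_def)
    apply (simp_all add: mat_exp_def mat2_pow[OF pq] t1 t2 t3)
    done
qed

lemma rot_exp:
  fixes th p q :: real
  assumes pq: "p^2 + q^2 = 1"
  shows "mat_exp (mat2 ((-\<i> * th) * p) ((-\<i> * th) * q) ((-\<i> * th) * q) (-((-\<i> * th) * p)))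
    = mat2 (cos th - \<i> * sin th * p) (- \<i> * sin th * q) (- \<i> * sin th * q) (cos th + \<i> * sin th * p)"
proof -
  have pq': "(complex_of_real p)^2 + (complex_of_real q)^2 = 1"
    by (metis pq of_real_1 of_real_add of_real_power)
  have e1: "exp (-\<i> * th) = cos th - \<i> * sin th"
    using cis_conv_exp[of "-th"] by (simp add: complex_eq_iff)
  have e2: "exp (- (-\<i> * th)) = cos th + \<i> * sin th"
    using cis_conv_exp[of "th"] by (simp add: complex_eq_iff)
  show ?thesis
    unfolding mat2_exp[OF pq'] e1 e2
    by (simp add: algebra_simps)
qed

lemma sum2': "(\<Sum>i \<in> {0..<2}. f i) = f 0 + f (Suc 0)"
  by (simp add: eval_nat_numeral)

lemma eig2:
  assumes "eigenvalue (mat2 a b c d) l"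
  shows "(a-l)*(d-l) = b*c"
proof -
  obtain v where v: "v \<in> carrier_vec 2" "v \<noteq> 0\<^sub>v 2" "mat2 a b c d *\<^sub>v v = l \<cdot>\<^sub>v v"
    using assms unfolding eigenvalue_def eigenvector_def by auto
  have dv: "dim_vec v = 2" using v(1) by auto
  have e0: "a * v$0 + b * v$1 = l * v$0"
  proof -
    have "(mat2 a b c d *\<^sub>v v) $ 0 = (l \<cdot>\<^sub>v v) $ 0" using v(3) by simp
    then show ?thesis using dv by (simp add: scalar_prod_def row_def sum2')
  qed
  have e1: "c * v$0 + d * v$1 = l * v$1"
  proof -
    have "(mat2 a b c d *\<^sub>v v) $ 1 = (l \<cdot>\<^sub>v v) $ 1" using v(3) by simp
    then show ?thesis using dv by (simp add: scalar_prod_def row_def sum2')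
  qed
  have nz: "v$0 \<noteq> 0 \<or> v$1 \<noteq> 0"
  proof (rule ccontr)
    assume "\<not> ?thesis"
    then have "v = 0\<^sub>v 2"
      by (intro eq_vecI) (auto simp: dv less_2_cases_iff)
    with v(2) show False by simp
  qed
  have f0: "(a-l) * v$0 = - b * v$1" using e0 by (simp add: algebra_simps)
  have f1: "(d-l) * v$1 = - c * v$0" using e1 by (simp add: algebra_simps)
  show ?thesis
  proof (cases "v$0 = 0")
    case True
    then have "v$1 \<noteq> 0" using nz by auto
    with f0 f1 True show ?thesis by auto
  next
    case False
    show ?thesis
    proof (cases "v$1 = 0")
      case True
      with f0 f1 False show ?thesis by auto
    next
      case F2: False
      have "(a-l)*(d-l) * (v$0 * v$1) = ((a-l) * v$0) * ((d-l) * v$1)" by (simp add: algebra_simps)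
      also have "\<dots> = b*c * (v$0 * v$1)" unfolding f0 f1 by (simp add: algebra_simps)
      finally show ?thesis using False F2 by simp
    qed
  qed
qed

lemma det_mult2:
  fixes x y z w e f g h :: complex
  shows "(x*e+y*g)*(z*f+w*h) - (x*f+y*h)*(z*e+w*g) = (x*w - y*z)*(e*h - f*g)"
  by (simp add: algebra_simps)

lemma det_rot:
  fixes C S p q :: real
  assumes "C^2 + S^2 = 1" "p^2 + q^2 = 1"
  shows "(C - \<i> * S * p) * (C + \<i> * S * p) - (- \<i> * S * q) * (- \<i> * S * q) = 1"
proof -
  have "(C - \<i> * S * p) * (C + \<i> * S * p) - (- \<i> * S * q) * (- \<i> * S * q)
      = complex_of_real (C^2 + S^2 * (p^2 + q^2))"
    by (simp add: complex_eq_iff power2_eq_square algebra_simps)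
  also have "\<dots> = 1" using assms by simp
  finally show ?thesis .
qed

lemma eig_cos:
  fixes C1 S1 p1 q1 C2 S2 p2 q2 \<mu> :: real
  assumes h1: "C1^2 + S1^2 = 1" and h2: "C2^2 + S2^2 = 1"
    and h3: "p1^2 + q1^2 = 1" and h4: "p2^2 + q2^2 = 1"
    and ev: "eigenvalue (mat2 (C2 - \<i> * S2 * p2) (- \<i> * S2 * q2) (- \<i> * S2 * q2) (C2 + \<i> * S2 * p2) *
       mat_adjoint (mat2 (C1 - \<i> * S1 * p1) (- \<i> * S1 * q1) (- \<i> * S1 * q1) (C1 + \<i> * S1 * p1))) (cis \<mu>)"
  shows "cos \<mu> = C1*C2 + S1*S2*(p1*p2+q1*q2)"
proof -
  define x where "x = C2 - \<i> * S2 * p2"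
  define y where "y = - \<i> * S2 * q2"
  define w where "w = C2 + \<i> * S2 * p2"
  define e where "e = C1 + \<i> * S1 * p1"
  define f where "f = \<i> * S1 * q1"
  define h where "h = C1 - \<i> * S1 * p1"
  have adj: "mat_adjoint (mat2 (C1 - \<i> * S1 * p1) (- \<i> * S1 * q1) (- \<i> * S1 * q1) (C1 + \<i> * S1 * p1))
     = mat2 e f f h"
    unfolding mat2_adj e_def f_def h_def by simp
  let ?l = "cis \<mu>"
  have "eigenvalue (mat2 (x*e+y*f) (x*f+y*h) (y*e+w*f) (y*f+w*h)) ?l"
    using ev unfolding adj by (simp add: mat2_mult x_def y_def w_def)
  from eig2[OF this] have E: "(x*e+y*f - ?l) * (y*f+w*h - ?l) = (x*f+y*h) * (y*e+w*f)" .
  have D: "(x*e+y*f)*(y*f+w*h) - (x*f+y*h)*(y*e+w*f) = 1"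
  proof -
    have "(x*e+y*f)*(y*f+w*h) - (x*f+y*h)*(y*e+w*f) = (x*w - y*y)*(e*h - f*f)"
      by (rule det_mult2)
    also have "x*w - y*y = 1" unfolding x_def w_def y_def using det_rot[OF h2 h4] by simp
    also have "e*h - f*f = 1"
    proof -
      have "e*h - f*f = (C1 - \<i> * S1 * p1) * (C1 + \<i> * S1 * p1) - (- \<i> * S1 * q1) * (- \<i> * S1 * q1)"
        unfolding e_def h_def f_def by (simp add: algebra_simps)
      then show ?thesis using det_rot[OF h1 h3] by simp
    qed
    finally show ?thesis by simp
  qed
  define T where "T = C1*C2 + S1*S2*(p1*p2+q1*q2)"
  have Tr: "(x*e+y*f) + (y*f+w*h) = 2 * complex_of_real T"
    unfolding x_def y_def w_def e_def f_def h_def T_def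
    by (simp add: complex_eq_iff algebra_simps)
  have Q: "?l * ?l - 2 * complex_of_real T * ?l + 1 = 0"
  proof -
    have "?l * ?l - ((x*e+y*f) + (y*f+w*h)) * ?l + ((x*e+y*f)*(y*f+w*h) - (x*f+y*h)*(y*e+w*f)) = 0"
      using E by (simp add: algebra_simps)
    then show ?thesis unfolding Tr D .
  qed
  have "cis (-\<mu>) * (?l * ?l - 2 * complex_of_real T * ?l + 1) = ?l + cis (-\<mu>) - 2 * complex_of_real T"
    by (simp add: algebra_simps cis_mult)
  with Q have "?l + cis (-\<mu>) = 2 * complex_of_real T" by simp
  then have "Re (?l + cis (-\<mu>)) = 2 * T" by simp
  then show ?thesis unfolding T_def by simp
qed

lemma H_form:
  fixes r a b t :: real
  shows "(- \<i> * complex_of_real t) \<cdot>\<^sub>m (complex_of_real r \<cdot>\<^sub>m mat2 (- a) b b a)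
    = mat2 ((-\<i> * complex_of_real (t*r)) * complex_of_real (-a)) ((-\<i> * complex_of_real (t*r)) * complex_of_real b)
           ((-\<i> * complex_of_real (t*r)) * complex_of_real b) (-((-\<i> * complex_of_real (t*r)) * complex_of_real (-a)))"
  by (simp add: mat2_smult algebra_simps)

theorem lemma1:
  fixes m k t \<mu> :: real
  assumes "0 \<le> m" "m \<le> 1"
    and "- pi \<le> k" "k \<le> pi"
    and "(k, m) \<noteq> (0, 0)"
    and "sin (qca_omega k m) \<noteq> 0"
    and "eigenvalue (V_mat k m t) (cis \<mu>)"
  shows "cos \<mu> \<ge> cos (alpha k m * t) - beta k m"
proof -
  define n where "n = qca_n m"
  define w where "w = qca_omega k m"
  define wD where "wD = dirac_omega k m"
  have n0: "0 \<le> n" and n2: "n^2 = 1 - m^2" using assms(1,2) unfolding n_def qca_n_def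
    by (auto simp: power_le_one)
  have n1: "n \<le> 1" using assms(1,2) unfolding n_def qca_n_def by (simp add: real_sqrt_le_1_iff)
  have xb: "\<bar>n * cos k\<bar> \<le> 1"
    using n0 n1 abs_cos_le_one[of k] by (simp add: abs_mult mult_le_one)
  have sw: "sin w = sqrt (1 - (n * cos k)^2)"
    unfolding w_def qca_omega_def n_def[symmetric] using xb by (simp add: sin_arccos abs_le_iff)
  have x2: "(n * cos k)^2 \<le> 1" using xb by (simp add: abs_square_le_1)
  have swpos: "sin w > 0"
  proof -
    have "sin w \<ge> 0" using sw x2 by simp
    moreover have "sin w \<noteq> 0" using assms(6) unfolding w_def by simp
    ultimately show ?thesis by simp
  qed
  have sw2: "(sin w)^2 = m^2 + (n * sin k)^2"
  proof -
    have "(sin w)^2 = 1 - (n*cos k)^2" using sw x2 by simp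
    also have "\<dots> = m^2 + (n * sin k)^2"
      by (simp add: power_mult_distrib cos_squared_eq n2 algebra_simps)
    finally show ?thesis .
  qed
  have kmpos: "k^2 + m^2 > 0" using assms(5)
    by (simp add: sum_power2_gt_zero_iff)
  have wDpos: "wD > 0" unfolding wD_def dirac_omega_def using kmpos by simp
  have wD2: "wD^2 = k^2 + m^2" unfolding wD_def dirac_omega_def using kmpos by simp
  define p1 where "p1 = - (n * sin k / sin w)"
  define q1 where "q1 = m / sin w"
  define p2 where "p2 = - (k / wD)"
  define q2 where "q2 = m / wD"
  have pq1: "p1^2 + q1^2 = 1"
  proof -
    have "p1^2+q1^2 = ((n*sin k)^2 + m^2)/(sin w)^2" unfolding p1_def q1_def by (simp add: power_divide add_divide_distrib)
    also have "\<dots> = (sin w)^2/(sin w)^2" using sw2 by (simp add: add.commute)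
    also have "\<dots> = 1" using swpos by simp
    finally show ?thesis .
  qed
  have pq2: "p2^2 + q2^2 = 1"
  proof -
    have "p2^2+q2^2 = (k^2 + m^2)/wD^2" unfolding p2_def q2_def by (simp add: power_divide add_divide_distrib)
    also have "\<dots> = wD^2/wD^2" using wD2 by simp
    also have "\<dots> = 1" using wDpos by simp
    finally show ?thesis .
  qed
  have v1: "qca_v k m = - p1" unfolding p1_def qca_v_def n_def w_def by simp
  have v2: "dirac_v k m = - p2" unfolding p2_def dirac_v_def wD_def dirac_omega_def by simp
  have q1p: "q1 \<ge> 0" unfolding q1_def using swpos assms(1) by simp
  have q2p: "q2 \<ge> 0" unfolding q2_def using wDpos assms(1) by simp
  have sq: "sqrt ((1 - (qca_v k m)\<^sup>2) * (1 - (dirac_v k m)\<^sup>2)) = q1 * q2"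
  proof -
    have "(1 - (qca_v k m)\<^sup>2) * (1 - (dirac_v k m)\<^sup>2) = (q1*q2)^2"
    proof -
      have a: "1 - p1^2 = q1^2" "1 - p2^2 = q2^2" using pq1 pq2 by simp_all
      show ?thesis unfolding v1 v2 by (simp add: a power_mult_distrib)
    qed
    then show ?thesis using q1p q2p by simp
  qed
  have beta_eq: "beta k m = 1 - (p1*p2 + q1*q2)"
    unfolding beta_def sq unfolding v1 v2 by simp
  have HQ: "(- \<i> * complex_of_real t) \<cdot>\<^sub>m qca_H k m =
     mat2 ((-\<i> * complex_of_real (t*w)) * complex_of_real p1) ((-\<i> * complex_of_real (t*w)) * complex_of_real q1)
           ((-\<i> * complex_of_real (t*w)) * complex_of_real q1) (-((-\<i> * complex_of_real (t*w)) * complex_of_real p1))"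
  proof -
    have "(- \<i> * complex_of_real t) \<cdot>\<^sub>m qca_H k m =
      (- \<i> * complex_of_real t) \<cdot>\<^sub>m (complex_of_real (w / sin w) \<cdot>\<^sub>m mat2 (- (n * sin k)) m m (n * sin k))"
      unfolding qca_H_def n_def w_def by simp
    also have "\<dots> = mat2 ((-\<i> * complex_of_real (t*(w / sin w))) * complex_of_real (-(n * sin k))) ((-\<i> * complex_of_real (t*(w / sin w))) * complex_of_real m)
           ((-\<i> * complex_of_real (t*(w / sin w))) * complex_of_real m) (-((-\<i> * complex_of_real (t*(w / sin w))) * complex_of_real (-(n * sin k))))"
      by (rule H_form)
    also have "\<dots> = mat2 ((-\<i> * complex_of_real (t*w)) * complex_of_real p1) ((-\<i> * complex_of_real (t*w)) * complex_of_real q1)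
           ((-\<i> * complex_of_real (t*w)) * complex_of_real q1) (-((-\<i> * complex_of_real (t*w)) * complex_of_real p1))"
    proof -
      have r1: "complex_of_real (t*(w / sin w)) * complex_of_real (-(n * sin k)) = complex_of_real (t*w) * complex_of_real p1"
        unfolding p1_def of_real_mult[symmetric] by simp
      have r2: "complex_of_real (t*(w / sin w)) * complex_of_real m = complex_of_real (t*w) * complex_of_real q1"
        unfolding q1_def of_real_mult[symmetric] by simp
      show ?thesis by (simp only: mult.assoc r1 r2)
    qed
    finally show ?thesis .
  qed
  have HD: "(- \<i> * complex_of_real t) \<cdot>\<^sub>m dirac_H k m =
     mat2 ((-\<i> * complex_of_real (t*wD)) * complex_of_real p2) ((-\<i> * complex_of_real (t*wD)) * complex_of_real q2)
           ((-\<i> * complex_of_real (t*wD)) * complex_of_real q2) (-((-\<i> * complex_of_real (t*wD)) * complex_of_real p2))"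
  proof -
    have "(- \<i> * complex_of_real t) \<cdot>\<^sub>m dirac_H k m =
      (- \<i> * complex_of_real t) \<cdot>\<^sub>m (complex_of_real 1 \<cdot>\<^sub>m mat2 (- k) m m k)"
      unfolding dirac_H_def by (simp add: mat2_smult)
    also have "\<dots> = mat2 ((-\<i> * complex_of_real (t*1)) * complex_of_real (-k)) ((-\<i> * complex_of_real (t*1)) * complex_of_real m)
           ((-\<i> * complex_of_real (t*1)) * complex_of_real m) (-((-\<i> * complex_of_real (t*1)) * complex_of_real (-k)))"
      by (rule H_form)
    also have "\<dots> = mat2 ((-\<i> * complex_of_real (t*wD)) * complex_of_real p2) ((-\<i> * complex_of_real (t*wD)) * complex_of_real q2)
           ((-\<i> * complex_of_real (t*wD)) * complex_of_real q2) (-((-\<i> * complex_of_real (t*wD)) * complex_of_real p2))"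
    proof -
      have r1: "complex_of_real (t*1) * complex_of_real (-k) = complex_of_real (t*wD) * complex_of_real p2"
        unfolding p2_def of_real_mult[symmetric] using wDpos by simp
      have r2: "complex_of_real (t*1) * complex_of_real m = complex_of_real (t*wD) * complex_of_real q2"
        unfolding q2_def of_real_mult[symmetric] using wDpos by simp
      show ?thesis by (simp only: mult.assoc r1 r2)
    qed
    finally show ?thesis .
  qed
  have UQ: "qca_U k m t = mat2 (cos (t*w) - \<i> * sin (t*w) * p1) (- \<i> * sin (t*w) * q1) (- \<i> * sin (t*w) * q1) (cos (t*w) + \<i> * sin (t*w) * p1)"
    unfolding qca_U_def HQ by (rule rot_exp[OF pq1])
  have UD: "dirac_U k m t = mat2 (cos (t*wD) - \<i> * sin (t*wD) * p2) (- \<i> * sin (t*wD) * q2) (- \<i> * sin (t*wD) * q2) (cos (t*wD) + \<i> * sin (t*wD) * p2)"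
    unfolding dirac_U_def HD by (rule rot_exp[OF pq2])
  have cm: "cos \<mu> = cos (t*w) * cos (t*wD) + sin (t*w) * sin (t*wD) * (p1*p2+q1*q2)"
    by (rule eig_cos[OF sin_cos_squared_add2 sin_cos_squared_add2 pq1 pq2]) (use assms(7) in \<open>simp add: V_mat_def UQ UD\<close>)
  have ca: "cos (alpha k m * t) = cos (t*wD) * cos (t*w) + sin (t*wD) * sin (t*w)"
  proof -
    have "alpha k m * t = t*wD - t*w" unfolding alpha_def wD_def w_def by (simp add: algebra_simps)
    then show ?thesis by (simp add: cos_diff)
  qed
  define g where "g = p1*p2+q1*q2"
  define P where "P = sin (t*w) * sin (t*wD)"
  have g1: "g \<le> 1"
  proof -
    have "0 \<le> (p1-p2)^2 + (q1-q2)^2" by simp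
    also have "\<dots> = (p1^2+q1^2) + (p2^2+q2^2) - 2*g" unfolding g_def by (simp add: power2_eq_square algebra_simps)
    finally show ?thesis using pq1 pq2 by simp
  qed
  have P1: "P \<le> 1"
  proof -
    have "\<bar>P\<bar> \<le> 1" unfolding P_def abs_mult
      by (rule mult_le_one) (auto simp: abs_sin_le_one)
    then show ?thesis by simp
  qed
  have "0 \<le> (1-g)*(1-P)" using g1 P1 by simp
  moreover have "(1-g)*(1-P) = 1 - g - P + g*P" by (simp add: algebra_simps)
  ultimately show ?thesis
    unfolding cm ca beta_eq g_def[symmetric]
    unfolding mult.commute[of "sin (t*wD)" "sin (t*w)"] P_def[symmetric] by (simp add: algebra_simps)
qed
end
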